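(* Let $n_A,n_B\ge1$, $\Delta\ge 0$, and let $H\in\mathbb{C}^{(n_An_B)\times(n_An_B)}$ be a Hermitian matrix (the announced payoff Hamiltonian, on $\mathbb{C}^{n_A}\otimes\mathbb{C}^{n_B}$). Let $$\Phi(H)=\operatorname*{arg\,max}_{\rho_B\in\mathcal{P}_B}\ \min_{\rho_A\in\mathcal{P}_A}\operatorname{tr}\big((\rho_A\otimes\rho_B)H\big)$$ be the set of security strategies of the maximizing player $B$ (the "naive victim") in the zero-sum game with payoff $\operatorname{tr}((\rho_A\otimes\rho_B)H)$, and let $$\Phi_r(H)=\operatorname*{arg\,max}_{\rho_B\in\mathcal{P}_B}\ \min_{\rho_A\in\mathcal{P}_A,\ D\in\mathcal{D}}\operatorname{tr}\big((\rho_A\otimes\rho_B)(H-D)\big)$$ be the set of strategies of a "robust victim" who optimizes the worst-case outcome over all true Hamiltonians $H-D$ consistent with the announced $H$ and the deception budget. Then $\Phi(H)=\Phi_r(H)$.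
   Context: $\mathcal{P}_A$ (resp. $\mathcal{P}_B$) is the set of $n_A\times n_A$ (resp. $n_B\times n_B$) complex density matrices, i.e. positive semidefinite matrices of trace one. The deception set is $\mathcal{D}=\{D\in\mathbb{C}^{(n_An_B)\times(n_An_B)}: D=D^\dagger,\ \|D\|_1\le\Delta\}$, where $\|A\|_1=\sup_{\|x\|_1=1}\|Ax\|_1$ is the matrix norm induced by the vector $1$-norm. Player $A$ (the deceiver) is the minimizer and player $B$ (the victim) the maximizer. *)

theory Defs
  imports Complex_Main "Jordan_Normal_Form.Matrix"
begin

definition hermitian_mat :: "complex mat \<Rightarrow> bool" where
  "hermitian_mat A \<longleftrightarrow> dim_row A = dim_col A \<and>
     (\<forall>i < dim_row A. \<forall>j < dim_row A. A $$ (i, j) = cnj (A $$ (j, i)))"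

definition psd_mat :: "complex mat \<Rightarrow> bool" where
  "psd_mat A \<longleftrightarrow> dim_row A = dim_col A \<and>
     (\<forall>x \<in> carrier_vec (dim_row A).
        let q = (\<Sum>i<dim_row A. cnj (x $ i) * (A *\<^sub>v x) $ i) in Im q = 0 \<and> Re q \<ge> 0)"

definition mtrace :: "complex mat \<Rightarrow> complex" where
  "mtrace A = (\<Sum>i<dim_row A. A $$ (i, i))"

definition density_mats :: "nat \<Rightarrow> complex mat set" where
  "density_mats n = {\<rho>. \<rho> \<in> carrier_mat n n \<and> psd_mat \<rho> \<and> mtrace \<rho> = 1}"

text \<open>Kronecker product, with the standard index convention (i_A n_B + i_B).\<close>
definition kron :: "complex mat \<Rightarrow> complex mat \<Rightarrow> complex mat" where
  "kron A B = mat (dim_row A * dim_row B) (dim_col A * dim_col B)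
     (\<lambda>(i, j). A $$ (i div dim_row B, j div dim_col B) * B $$ (i mod dim_row B, j mod dim_col B))"

definition vec_norm1 :: "complex vec \<Rightarrow> real" where
  "vec_norm1 x = (\<Sum>i<dim_vec x. cmod (x $ i))"

definition induced_norm1 :: "complex mat \<Rightarrow> real" where
  "induced_norm1 D = Sup {vec_norm1 (D *\<^sub>v x) | x. x \<in> carrier_vec (dim_col D) \<and> vec_norm1 x = 1}"

definition deception_set :: "nat \<Rightarrow> real \<Rightarrow> complex mat set" where
  "deception_set n \<Delta> = {D. D \<in> carrier_mat n n \<and> hermitian_mat D \<and> induced_norm1 D \<le> \<Delta>}"

text \<open>Payoff tr((rho_A (x) rho_B) M); it is real for Hermitian M, we take the real part.\<close>
definition payoff :: "complex mat \<Rightarrow> complex mat \<Rightarrow> complex mat \<Rightarrow> real" where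
  "payoff \<rho>A \<rho>B M = Re (mtrace (kron \<rho>A \<rho>B * M))"

definition naive_value :: "nat \<Rightarrow> complex mat \<Rightarrow> complex mat \<Rightarrow> real" where
  "naive_value nA H \<rho>B = Inf {payoff \<rho>A \<rho>B H | \<rho>A. \<rho>A \<in> density_mats nA}"

definition robust_value :: "nat \<Rightarrow> nat \<Rightarrow> real \<Rightarrow> complex mat \<Rightarrow> complex mat \<Rightarrow> real" where
  "robust_value nA nB \<Delta> H \<rho>B =
     Inf {payoff \<rho>A \<rho>B (H - D) | \<rho>A D. \<rho>A \<in> density_mats nA \<and> D \<in> deception_set (nA * nB) \<Delta>}"

definition Phi :: "nat \<Rightarrow> nat \<Rightarrow> complex mat \<Rightarrow> complex mat set" where
  "Phi nA nB H = {\<rho>B \<in> density_mats nB.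
      \<forall>\<sigma> \<in> density_mats nB. naive_value nA H \<sigma> \<le> naive_value nA H \<rho>B}"

definition Phi_r :: "nat \<Rightarrow> nat \<Rightarrow> real \<Rightarrow> complex mat \<Rightarrow> complex mat set" where
  "Phi_r nA nB \<Delta> H = {\<rho>B \<in> density_mats nB.
      \<forall>\<sigma> \<in> density_mats nB. robust_value nA nB \<Delta> H \<sigma> \<le> robust_value nA nB \<Delta> H \<rho>B}"

end

theory Submission
  imports Defs
begin

lemma mat_vec_entry:
  assumes "A \<in> carrier_mat n n" "x \<in> carrier_vec n" "k < n"
  shows "(A *\<^sub>v x) $ k = (\<Sum>l<n. A $$ (k,l) * x $ l)"
  using assms by (auto simp: scalar_prod_def atLeast0LessThan)

lemma quad_support:
  assumes A: "A \<in> carrier_mat n n" and x: "x \<in> carrier_vec n" and S: "S \<subseteq> {..<n}"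
    and z: "\<And>k. k < n \<Longrightarrow> k \<notin> S \<Longrightarrow> x $ k = 0"
  shows "(\<Sum>i<n. cnj (x $ i) * (A *\<^sub>v x) $ i) = (\<Sum>k\<in>S. \<Sum>l\<in>S. cnj (x $ k) * A $$ (k,l) * x $ l)"
proof -
  have fin: "finite {..<n}" by simp
  have "(\<Sum>i<n. cnj (x $ i) * (A *\<^sub>v x) $ i) = (\<Sum>i<n. \<Sum>l<n. cnj (x $ i) * A $$ (i,l) * x $ l)"
    by (rule sum.cong, simp, simp add: mat_vec_entry[OF A x] sum_distrib_left mult.assoc)
  also have "\<dots> = (\<Sum>i\<in>S. \<Sum>l<n. cnj (x $ i) * A $$ (i,l) * x $ l)"
    by (rule sum.mono_neutral_right, insert S z, auto)
  also have "\<dots> = (\<Sum>i\<in>S. \<Sum>l\<in>S. cnj (x $ i) * A $$ (i,l) * x $ l)"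
    by (rule sum.cong, simp, rule sum.mono_neutral_right, insert S z, auto)
  finally show ?thesis .
qed

lemma psd_quadD:
  assumes "psd_mat A" "A \<in> carrier_mat n n" "x \<in> carrier_vec n"
  shows "Im (\<Sum>k<n. cnj (x $ k) * (A *\<^sub>v x) $ k) = 0 \<and> Re (\<Sum>k<n. cnj (x $ k) * (A *\<^sub>v x) $ k) \<ge> 0"
proof -
  have "dim_row A = n" using assms(2) by simp
  with assms(1,3) show ?thesis unfolding psd_mat_def Let_def by blast
qed

lemma psd_diag:
  assumes "psd_mat A" "A \<in> carrier_mat n n" "i < n"
  shows "Im (A $$ (i,i)) = 0 \<and> Re (A $$ (i,i)) \<ge> 0"
proof -
  let ?x = "unit_vec n i :: complex vec"
  have x: "?x \<in> carrier_vec n" by simp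
  have q: "(\<Sum>k<n. cnj (?x $ k) * (A *\<^sub>v ?x) $ k) = A $$ (i,i)"
    using quad_support[OF assms(2) x, of "{i}"] assms(3) by simp
  show ?thesis using psd_quadD[OF assms(1,2) x] q by simp
qed

lemma psd_pair:
  fixes a b :: complex
  assumes "psd_mat A" "A \<in> carrier_mat n n" "i < n" "j < n" "i \<noteq> j"
  defines "q \<equiv> cnj a * A $$ (i,i) * a + cnj a * A $$ (i,j) * b + (cnj b * A $$ (j,i) * a + cnj b * A $$ (j,j) * b)"
  shows "Im q = 0 \<and> Re q \<ge> 0"
proof -
  let ?x = "vec n (\<lambda>k. if k = i then a else if k = j then b else 0) :: complex vec"
  have x: "?x \<in> carrier_vec n" by simp
  have "(\<Sum>k<n. cnj (?x $ k) * (A *\<^sub>v ?x) $ k) = q"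
    using quad_support[OF assms(2) x, of "{i,j}"] assms(3-5) unfolding q_def by simp
  then show ?thesis using psd_quadD[OF assms(1,2) x] by simp
qed

lemma psd_herm:
  assumes "psd_mat A" "A \<in> carrier_mat n n" "i < n" "j < n"
  shows "A $$ (j,i) = cnj (A $$ (i,j))"
proof (cases "i = j")
  case True
  then show ?thesis using psd_diag[OF assms(1,2,3)] by (simp add: complex_eq_iff)
next
  case False
  have di: "Im (A $$ (i,i)) = 0" and dj: "Im (A $$ (j,j)) = 0"
    using psd_diag[OF assms(1,2)] assms(3,4) by auto
  have 1: "Im (A $$ (i,j)) + Im (A $$ (j,i)) = 0"
    using psd_pair[OF assms False, of 1 1] di dj by simp
  have 2: "Re (A $$ (i,j)) - Re (A $$ (j,i)) = 0"
    using psd_pair[OF assms False, of 1 \<i>] di dj by simp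
  show ?thesis using 1 2 by (simp add: complex_eq_iff)
qed

lemma psd_offdiag:
  assumes "psd_mat A" "A \<in> carrier_mat n n" "i < n" "j < n"
  shows "(cmod (A $$ (i,j)))^2 \<le> Re (A $$ (i,i)) * Re (A $$ (j,j))"
proof (cases "i = j")
  case True
  then show ?thesis using psd_diag[OF assms(1,2,3)] 
    by (simp add: cmod_def power2_eq_square)
next
  case False
  define c where "c = A $$ (i,j)"
  define p where "p = Re (A $$ (i,i))"
  define r where "r = Re (A $$ (j,j))"
  have di: "A $$ (i,i) = of_real p" using psd_diag[OF assms(1,2,3)] unfolding p_def by (simp add: complex_eq_iff)
  have dj: "A $$ (j,j) = of_real r" using psd_diag[OF assms(1,2,4)] unfolding r_def by (simp add: complex_eq_iff)
  have h: "A $$ (j,i) = cnj c" using psd_herm[OF assms] unfolding c_def .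
  have p0: "p \<ge> 0" "r \<ge> 0" using psd_diag[OF assms(1,2)] assms(3,4) unfolding p_def r_def by auto
  have cc: "cmod c * cmod c = Re c * Re c + Im c * Im c" by (metis cmod_power2 power2_eq_square)
  have key: "p - 2*t*(cmod c)^2 + t^2*(cmod c)^2*r \<ge> 0" for t :: real
  proof -
    have "Re (cnj 1 * A $$ (i,i) * 1 + cnj 1 * A $$ (i,j) * (- of_real t * cnj c) + (cnj (- of_real t * cnj c) * A $$ (j,i) * 1 + cnj (- of_real t * cnj c) * A $$ (j,j) * (- of_real t * cnj c))) \<ge> 0"
      using psd_pair[OF assms False, of 1 "- of_real t * cnj c"] by blast
    also have "Re (cnj 1 * A $$ (i,i) * 1 + cnj 1 * A $$ (i,j) * (- of_real t * cnj c) + (cnj (- of_real t * cnj c) * A $$ (j,i) * 1 + cnj (- of_real t * cnj c) * A $$ (j,j) * (- of_real t * cnj c)))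
       = p - 2*t*(cmod c)^2 + t^2*(cmod c)^2*r"
      unfolding di dj h c_def[symmetric]
      by (simp add: cc algebra_simps power2_eq_square)
    finally show ?thesis .
  qed
  show ?thesis
  proof (cases "r > 0")
    case True
    have "p - 2*(1/r)*(cmod c)^2 + (1/r)^2*(cmod c)^2*r \<ge> 0" by (rule key)
    also have "p - 2*(1/r)*(cmod c)^2 + (1/r)^2*(cmod c)^2*r = (p*r - (cmod c)^2)/r"
      using True by (simp add: field_simps power2_eq_square)
    finally have "p*r - (cmod c)^2 \<ge> 0" using True by (simp add: divide_nonneg_pos zero_le_divide_iff)
    then show ?thesis unfolding c_def p_def r_def by simp
  next
    case False
    then have r0: "r = 0" using p0 by simp
    show ?thesis
    proof (rule ccontr)
      assume "\<not> ?thesis"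
      then have cpos: "(cmod c)^2 > 0" unfolding c_def p_def r_def[symmetric] using r0 by simp
      have "p - 2*((p+1)/(2*(cmod c)^2))*(cmod c)^2 + ((p+1)/(2*(cmod c)^2))^2*(cmod c)^2*r \<ge> 0" by (rule key)
      then show False using r0 cpos by simp
    qed
  qed
qed

lemma aux1: "a < (m::nat) \<Longrightarrow> b < n \<Longrightarrow> a * n + b < m * n"
proof -
  assume "a < m" "b < n"
  then have "a * n + b < (a+1) * n" by simp
  also have "\<dots> \<le> m * n" using \<open>a < m\<close> by (intro mult_right_mono) auto
  finally show ?thesis .
qed

lemma aux2: "b < m * (n::nat) \<Longrightarrow> b mod n < n"
  by (cases "n = 0") auto

lemma sum_div_mod:
  fixes f :: "nat \<Rightarrow> nat \<Rightarrow> 'a::comm_monoid_add"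
  shows "(\<Sum>i<m*n. f (i div n) (i mod n)) = (\<Sum>a<m. \<Sum>b<n. f a b)"
proof -
  have "(\<Sum>a<m. \<Sum>b<n. f a b) = (\<Sum>p\<in>{..<m}\<times>{..<n}. f (fst p) (snd p))"
    by (simp add: sum.cartesian_product case_prod_beta)
  also have "\<dots> = (\<Sum>i<m*n. f (i div n) (i mod n))"
    by (rule sum.reindex_bij_witness[where i = "\<lambda>i. (i div n, i mod n)" and j = "\<lambda>p. fst p * n + snd p"])
      (auto simp: less_mult_imp_div_less mult.commute intro: aux1 aux2)
  finally show ?thesis ..
qed

definition goodK :: "complex mat \<Rightarrow> nat \<Rightarrow> bool" where
  "goodK K n \<longleftrightarrow> K \<in> carrier_mat n n \<and> (\<forall>i<n. Im (K $$ (i,i)) = 0 \<and> Re (K $$ (i,i)) \<ge> 0)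
    \<and> (\<forall>i<n. \<forall>j<n. cmod (K $$ (i,j)) \<le> (Re (K $$ (i,i)) + Re (K $$ (j,j))) / 2)
    \<and> (\<Sum>i<n. Re (K $$ (i,i))) = 1"

lemma amgm_cmod:
  fixes z :: complex and X Y :: real
  assumes "(cmod z)^2 \<le> X * Y" "X \<ge> 0" "Y \<ge> 0"
  shows "cmod z \<le> (X + Y) / 2"
proof -
  have e: "((X + Y)/2)^2 - X * Y = ((X - Y)/2)^2" by (simp add: power2_eq_square algebra_simps)
  have "X * Y \<le> ((X + Y)/2)^2" using e zero_le_power2[of "(X - Y)/2"] by linarith
  with assms(1) have "(cmod z)^2 \<le> ((X + Y)/2)^2" by linarith
  moreover have "(X + Y)/2 \<ge> 0" using assms(2,3) by simp
  ultimately show ?thesis by (rule power2_le_imp_le)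
qed

lemma density_trace:
  assumes "\<rho> \<in> density_mats n"
  shows "(\<Sum>i<n. Re (\<rho> $$ (i,i))) = 1"
proof -
  have "\<rho> \<in> carrier_mat n n" "mtrace \<rho> = 1" using assms unfolding density_mats_def by auto
  then show ?thesis unfolding mtrace_def by (simp flip: Re_sum)
qed

lemma kron_good:
  assumes A: "\<rho>A \<in> density_mats nA" and B: "\<rho>B \<in> density_mats nB"
  shows "goodK (kron \<rho>A \<rho>B) (nA * nB)"
proof -
  have cA: "\<rho>A \<in> carrier_mat nA nA" and pA: "psd_mat \<rho>A" using A unfolding density_mats_def by auto
  have cB: "\<rho>B \<in> carrier_mat nB nB" and pB: "psd_mat \<rho>B" using B unfolding density_mats_def by auto
  let ?K = "kron \<rho>A \<rho>B"
  have ent: "?K $$ (i,j) = \<rho>A $$ (i div nB, j div nB) * \<rho>B $$ (i mod nB, j mod nB)"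
    if "i < nA * nB" "j < nA * nB" for i j
    using that cA cB unfolding kron_def by auto
  have bnd: "i div nB < nA" "i mod nB < nB" if "i < nA * nB" for i
    using that by (auto simp: less_mult_imp_div_less intro: aux2)
  have car: "?K \<in> carrier_mat (nA*nB) (nA*nB)" using cA cB unfolding kron_def by auto
  define dA where "dA a = Re (\<rho>A $$ (a,a))" for a
  define dB where "dB b = Re (\<rho>B $$ (b,b))" for b
  have dAr: "\<rho>A $$ (a,a) = of_real (dA a)" "dA a \<ge> 0" if "a < nA" for a
    using psd_diag[OF pA cA that] unfolding dA_def by (auto simp: complex_eq_iff)
  have dBr: "\<rho>B $$ (b,b) = of_real (dB b)" "dB b \<ge> 0" if "b < nB" for b
    using psd_diag[OF pB cB that] unfolding dB_def by (auto simp: complex_eq_iff)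
  have diag: "?K $$ (i,i) = of_real (dA (i div nB) * dB (i mod nB))" "dA (i div nB) * dB (i mod nB) \<ge> 0"
    if "i < nA * nB" for i
    using ent[OF that that] dAr[OF bnd(1)[OF that]] dBr[OF bnd(2)[OF that]] by auto
  have off: "cmod (?K $$ (i,j)) \<le> (Re (?K $$ (i,i)) + Re (?K $$ (j,j))) / 2"
    if i: "i < nA * nB" and j: "j < nA * nB" for i j
  proof -
    have "(cmod (?K $$ (i,j)))^2 = (cmod (\<rho>A $$ (i div nB, j div nB)))^2 * (cmod (\<rho>B $$ (i mod nB, j mod nB)))^2"
      unfolding ent[OF i j] by (simp add: norm_mult power_mult_distrib)
    also have "\<dots> \<le> (dA (i div nB) * dA (j div nB)) * (dB (i mod nB) * dB (j mod nB))"
      using psd_offdiag[OF pA cA bnd(1)[OF i] bnd(1)[OF j]] psd_offdiag[OF pB cB bnd(2)[OF i] bnd(2)[OF j]]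
      using dAr(2)[OF bnd(1)[OF i]] dAr(2)[OF bnd(1)[OF j]]
      unfolding dA_def dB_def by (intro mult_mono) auto
    also have "\<dots> = Re (?K $$ (i,i)) * Re (?K $$ (j,j))" using diag(1)[OF i] diag(1)[OF j] by simp
    finally show ?thesis using diag[OF i] diag[OF j] by (intro amgm_cmod) auto
  qed
  have tr: "(\<Sum>i<nA*nB. Re (?K $$ (i,i))) = 1"
  proof -
    have "(\<Sum>i<nA*nB. Re (?K $$ (i,i))) = (\<Sum>i<nA*nB. dA (i div nB) * dB (i mod nB))"
      using diag(1) by (intro sum.cong) auto
    also have "\<dots> = (\<Sum>a<nA. \<Sum>b<nB. dA a * dB b)" by (rule sum_div_mod)
    also have "\<dots> = (\<Sum>a<nA. dA a) * (\<Sum>b<nB. dB b)" by (simp add: sum_product)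
    also have "\<dots> = 1" using density_trace[OF A] density_trace[OF B] unfolding dA_def dB_def by simp
    finally show ?thesis .
  qed
  show ?thesis unfolding goodK_def using car diag off tr by auto
qed

lemma trace_bound:
  assumes g: "goodK K n" and M: "M \<in> carrier_mat n n"
    and rows: "\<And>i. i < n \<Longrightarrow> (\<Sum>j<n. cmod (M $$ (i,j))) \<le> c"
    and cols: "\<And>j. j < n \<Longrightarrow> (\<Sum>i<n. cmod (M $$ (i,j))) \<le> c"
  shows "\<bar>Re (mtrace (K * M))\<bar> \<le> c"
proof -
  have K: "K \<in> carrier_mat n n" using g unfolding goodK_def by auto
  define d where "d i = Re (K $$ (i,i))" for i
  have d0: "d i \<ge> 0" if "i < n" for i using g that unfolding goodK_def d_def by auto
  have koff: "cmod (K $$ (i,j)) \<le> (d i + d j) / 2" if "i < n" "j < n" for i j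
    using g that unfolding goodK_def d_def by auto
  have dsum: "(\<Sum>i<n. d i) = 1" using g unfolding goodK_def d_def by auto
  have tr: "mtrace (K * M) = (\<Sum>i<n. \<Sum>j<n. K $$ (i,j) * M $$ (j,i))"
    unfolding mtrace_def using K M by (auto simp: scalar_prod_def atLeast0LessThan intro!: sum.cong)
  have "\<bar>Re (mtrace (K * M))\<bar> \<le> cmod (mtrace (K * M))" by (rule abs_Re_le_cmod)
  also have "\<dots> \<le> (\<Sum>i<n. \<Sum>j<n. cmod (K $$ (i,j) * M $$ (j,i)))"
    unfolding tr by (rule order.trans[OF norm_sum sum_mono], rule norm_sum)
  also have "\<dots> \<le> (\<Sum>i<n. \<Sum>j<n. ((d i + d j) / 2) * cmod (M $$ (j,i)))"
    by (intro sum_mono, unfold norm_mult, rule mult_right_mono[OF koff]) auto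
  also have "\<dots> = (\<Sum>i<n. d i * (\<Sum>j<n. cmod (M $$ (j,i)))) / 2 + (\<Sum>j<n. d j * (\<Sum>i<n. cmod (M $$ (j,i)))) / 2"
  proof -
    have e1: "(\<Sum>i<n. \<Sum>j<n. ((d i + d j) / 2) * cmod (M $$ (j,i)))
       = (\<Sum>i<n. \<Sum>j<n. d i * cmod (M $$ (j,i))) / 2 + (\<Sum>i<n. \<Sum>j<n. d j * cmod (M $$ (j,i))) / 2"
      by (simp add: sum_divide_distrib sum.distrib add_divide_distrib ring_distribs)
    have e2: "(\<Sum>i<n. \<Sum>j<n. d j * cmod (M $$ (j,i))) = (\<Sum>j<n. \<Sum>i<n. d j * cmod (M $$ (j,i)))"
      by (rule sum.swap)
    show ?thesis unfolding e1 e2 by (simp add: sum_distrib_left)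
  qed
  also have "\<dots> \<le> (\<Sum>i<n. d i * c) / 2 + (\<Sum>j<n. d j * c) / 2"
    by (intro add_mono divide_right_mono sum_mono mult_left_mono) (auto intro: rows cols d0)
  also have "\<dots> = c" using dsum by (simp flip: sum_distrib_right)
  finally show ?thesis .
qed

lemma vec_norm1_bound:
  assumes D: "D \<in> carrier_mat n n" and x: "x \<in> carrier_vec n" and nx: "vec_norm1 x = 1"
  shows "vec_norm1 (D *\<^sub>v x) \<le> (\<Sum>i<n. \<Sum>j<n. cmod (D $$ (i,j)))"
proof -
  have xj: "cmod (x $ j) \<le> 1" if "j < n" for j
  proof -
    have "cmod (x $ j) \<le> (\<Sum>k<n. cmod (x $ k))" using that by (intro member_le_sum) auto
    then show ?thesis using nx x unfolding vec_norm1_def by simp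
  qed
  have "vec_norm1 (D *\<^sub>v x) = (\<Sum>i<n. cmod (\<Sum>j<n. D $$ (i,j) * x $ j))"
    unfolding vec_norm1_def using D x by (intro sum.cong) (simp_all add: mat_vec_entry[OF D x] del: index_mult_mat_vec)
  also have "\<dots> \<le> (\<Sum>i<n. \<Sum>j<n. cmod (D $$ (i,j)) * cmod (x $ j))"
    by (intro sum_mono order.trans[OF norm_sum]) (simp add: norm_mult)
  also have "\<dots> \<le> (\<Sum>i<n. \<Sum>j<n. cmod (D $$ (i,j)))"
    by (intro sum_mono) (auto intro: mult_left_le xj)
  finally show ?thesis .
qed

lemma unit_norm:
  assumes "j < n" shows "vec_norm1 (unit_vec n j :: complex vec) = 1"
proof -
  have "vec_norm1 (unit_vec n j :: complex vec) = (\<Sum>i<n. if i = j then 1 else 0)"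
    unfolding vec_norm1_def using assms by (intro sum.cong) auto
  also have "\<dots> = 1" using assms by simp
  finally show ?thesis .
qed

lemma unit_entry:
  fixes D :: "complex mat"
  assumes D: "D \<in> carrier_mat n n" and i: "i < n" and j: "j < n"
  shows "(D *\<^sub>v unit_vec n j) $ i = D $$ (i,j)"
proof -
  have "(D *\<^sub>v unit_vec n j) $ i = (\<Sum>l<n. D $$ (i,l) * unit_vec n j $ l)"
    by (rule mat_vec_entry[OF D _ i]) simp
  also have "\<dots> = (\<Sum>l<n. if l = j then D $$ (i,j) else 0)"
    using j by (intro sum.cong) auto
  also have "\<dots> = D $$ (i,j)" using j by simp
  finally show ?thesis .
qed

lemma col_le_norm:
  assumes D: "D \<in> carrier_mat n n" and j: "j < n"
  shows "(\<Sum>i<n. cmod (D $$ (i,j))) \<le> induced_norm1 D"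
proof -
  let ?S = "{vec_norm1 (D *\<^sub>v x) | x. x \<in> carrier_vec (dim_col D) \<and> vec_norm1 x = 1}"
  have le: "y \<le> (\<Sum>i<n. \<Sum>j<n. cmod (D $$ (i,j)))" if "y \<in> ?S" for y
  proof -
    from that obtain x where "y = vec_norm1 (D *\<^sub>v x)" "x \<in> carrier_vec (dim_col D)" "vec_norm1 x = 1" by blast
    then show ?thesis using vec_norm1_bound[OF D, of x] D by simp
  qed
  have bdd: "bdd_above ?S" by (rule bdd_aboveI, rule le)
  have u: "unit_vec n j \<in> carrier_vec (dim_col D)" "vec_norm1 (unit_vec n j :: complex vec) = 1"
    using D j unit_norm by auto
  have "vec_norm1 (D *\<^sub>v unit_vec n j) = (\<Sum>i<n. cmod (D $$ (i,j)))"
  proof -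
    show ?thesis unfolding vec_norm1_def using D unit_entry[OF D _ j] by simp
  qed
  moreover have "vec_norm1 (D *\<^sub>v unit_vec n j) \<in> ?S" using u by blast
  then have "vec_norm1 (D *\<^sub>v unit_vec n j) \<le> Sup ?S" by (rule cSup_upper[OF _ bdd])
  ultimately show ?thesis unfolding induced_norm1_def by simp
qed

lemma ident_norm:
  assumes "\<Delta> \<ge> 0" "n \<ge> 1"
  shows "induced_norm1 (complex_of_real \<Delta> \<cdot>\<^sub>m 1\<^sub>m n) = \<Delta>"
proof -
  let ?D = "complex_of_real \<Delta> \<cdot>\<^sub>m 1\<^sub>m n"
  have D: "?D \<in> carrier_mat n n" by simp
  have val: "vec_norm1 (?D *\<^sub>v x) = \<Delta>" if x: "x \<in> carrier_vec n" "vec_norm1 x = 1" for x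
  proof -
    have e: "(?D *\<^sub>v x) $ i = complex_of_real \<Delta> * x $ i" if "i < n" for i
    proof -
      have "(?D *\<^sub>v x) $ i = (\<Sum>l<n. ?D $$ (i,l) * x $ l)" by (rule mat_vec_entry[OF D x(1) that])
      also have "\<dots> = (\<Sum>l<n. if l = i then complex_of_real \<Delta> * x $ i else 0)"
        using that by (intro sum.cong) auto
      also have "\<dots> = complex_of_real \<Delta> * x $ i" using that by simp
      finally show ?thesis .
    qed
    have "vec_norm1 (?D *\<^sub>v x) = (\<Sum>i<n. \<Delta> * cmod (x $ i))"
      unfolding vec_norm1_def using e assms(1) by (auto simp: norm_mult intro!: sum.cong)
    also have "\<dots> = \<Delta>" using x unfolding vec_norm1_def by (simp flip: sum_distrib_left)
    finally show ?thesis .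
  qed
  have u: "unit_vec n 0 \<in> carrier_vec n" "vec_norm1 (unit_vec n 0 :: complex vec) = 1"
    using assms unit_norm by auto
  have "{vec_norm1 (?D *\<^sub>v x) | x. x \<in> carrier_vec (dim_col ?D) \<and> vec_norm1 x = 1} = {\<Delta>}"
  proof (intro equalityI subsetI)
    fix y assume "y \<in> {vec_norm1 (?D *\<^sub>v x) | x. x \<in> carrier_vec (dim_col ?D) \<and> vec_norm1 x = 1}"
    then obtain x where "y = vec_norm1 (?D *\<^sub>v x)" "x \<in> carrier_vec n" "vec_norm1 x = 1" by auto
    then show "y \<in> {\<Delta>}" using val by simp
  next
    fix y assume "y \<in> {\<Delta>}"
    then have "y = vec_norm1 (?D *\<^sub>v unit_vec n 0)" using val[OF u] by simp
    then show "y \<in> {vec_norm1 (?D *\<^sub>v x) | x. x \<in> carrier_vec (dim_col ?D) \<and> vec_norm1 x = 1}"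
      using u by auto
  qed
  then show ?thesis unfolding induced_norm1_def by simp
qed

lemma density_exists:
  assumes "n \<ge> 1" shows "\<exists>\<rho>. \<rho> \<in> density_mats n"
proof -
  define \<rho> :: "complex mat" where "\<rho> = mat n n (\<lambda>(i,j). if i = 0 \<and> j = 0 then 1 else 0)"
  have c: "\<rho> \<in> carrier_mat n n" unfolding \<rho>_def by simp
  have psd: "psd_mat \<rho>" unfolding psd_mat_def Let_def
  proof (intro conjI ballI)
    show "dim_row \<rho> = dim_col \<rho>" using c by simp
    fix x :: "complex vec" assume x: "x \<in> carrier_vec (dim_row \<rho>)"
    then have x': "x \<in> carrier_vec n" using c by simp
    have e: "(\<rho> *\<^sub>v x) $ i = (if i = 0 then x $ 0 else 0)" if "i < n" for i
    proof -
      have "(\<rho> *\<^sub>v x) $ i = (\<Sum>l<n. \<rho> $$ (i,l) * x $ l)" by (rule mat_vec_entry[OF c x' that])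
      also have "\<dots> = (\<Sum>l<n. if l = 0 then (if i = 0 then x $ 0 else 0) else 0)"
        using that unfolding \<rho>_def by (intro sum.cong) auto
      also have "\<dots> = (if i = 0 then x $ 0 else 0)" using assms by simp
      finally show ?thesis .
    qed
    have "(\<Sum>i<dim_row \<rho>. cnj (x $ i) * (\<rho> *\<^sub>v x) $ i) = (\<Sum>i<n. if i = 0 then cnj (x $ 0) * x $ 0 else 0)"
      using c e by (intro sum.cong) auto
    also have "\<dots> = cnj (x $ 0) * x $ 0" using assms by simp
    also have "\<dots> = of_real ((cmod (x $ 0))^2)" by (simp only: complex_norm_square mult.commute)
    finally have q: "(\<Sum>i<dim_row \<rho>. cnj (x $ i) * (\<rho> *\<^sub>v x) $ i) = of_real ((cmod (x $ 0))^2)" .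
    show "Im (\<Sum>i<dim_row \<rho>. cnj (x $ i) * (\<rho> *\<^sub>v x) $ i) = 0" unfolding q by simp
    show "Re (\<Sum>i<dim_row \<rho>. cnj (x $ i) * (\<rho> *\<^sub>v x) $ i) \<ge> 0" unfolding q by simp
  qed
  have "mtrace \<rho> = (\<Sum>i<n. if i = 0 then 1 else 0)" unfolding mtrace_def using c
    by (intro sum.cong) (auto simp: \<rho>_def)
  also have "\<dots> = 1" using assms by simp
  finally have "mtrace \<rho> = 1" .
  then show ?thesis using c psd unfolding density_mats_def by blast
qed

lemma kron_carrier:
  assumes "\<rho>A \<in> density_mats nA" "\<rho>B \<in> density_mats nB"
  shows "kron \<rho>A \<rho>B \<in> carrier_mat (nA*nB) (nA*nB)"
  using kron_good[OF assms] unfolding goodK_def by auto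

lemma payoff_split:
  assumes A: "\<rho>A \<in> density_mats nA" and B: "\<rho>B \<in> density_mats nB"
    and H: "H \<in> carrier_mat (nA*nB) (nA*nB)" and D: "D \<in> carrier_mat (nA*nB) (nA*nB)"
  shows "payoff \<rho>A \<rho>B (H - D) = payoff \<rho>A \<rho>B H - Re (mtrace (kron \<rho>A \<rho>B * D))"
proof -
  let ?K = "kron \<rho>A \<rho>B"
  have K: "?K \<in> carrier_mat (nA*nB) (nA*nB)" by (rule kron_carrier[OF A B])
  have "?K * (H - D) = ?K * H - ?K * D" by (rule mult_minus_distrib_mat[OF K H D])
  moreover have "mtrace (?K * H - ?K * D) = mtrace (?K * H) - mtrace (?K * D)"
    unfolding mtrace_def using K H D by (simp add: sum_subtractf)
  ultimately show ?thesis unfolding payoff_def by simp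
qed

lemma payoff_bound:
  assumes A: "\<rho>A \<in> density_mats nA" and B: "\<rho>B \<in> density_mats nB"
    and H: "H \<in> carrier_mat (nA*nB) (nA*nB)"
  shows "\<bar>payoff \<rho>A \<rho>B H\<bar> \<le> (\<Sum>i<nA*nB. \<Sum>j<nA*nB. cmod (H $$ (i,j)))"
  unfolding payoff_def
proof (rule trace_bound[OF kron_good[OF A B] H])
  fix i assume "i < nA*nB"
  then show "(\<Sum>j<nA*nB. cmod (H $$ (i,j))) \<le> (\<Sum>i<nA*nB. \<Sum>j<nA*nB. cmod (H $$ (i,j)))"
    by (intro member_le_sum[where f = "\<lambda>i. \<Sum>j<nA*nB. cmod (H $$ (i,j))"]) (auto intro: sum_nonneg)
next
  fix j assume "j < nA*nB"
  then show "(\<Sum>i<nA*nB. cmod (H $$ (i,j))) \<le> (\<Sum>i<nA*nB. \<Sum>j<nA*nB. cmod (H $$ (i,j)))"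
    by (intro sum_mono member_le_sum[where f = "\<lambda>j'. cmod (H $$ (_,j'))"]) auto
qed

lemma deception_bound:
  assumes A: "\<rho>A \<in> density_mats nA" and B: "\<rho>B \<in> density_mats nB"
    and D: "D \<in> deception_set (nA*nB) \<Delta>"
  shows "Re (mtrace (kron \<rho>A \<rho>B * D)) \<le> \<Delta>"
proof -
  let ?n = "nA*nB"
  have Dc: "D \<in> carrier_mat ?n ?n" and h: "hermitian_mat D" and nD: "induced_norm1 D \<le> \<Delta>"
    using D unfolding deception_set_def by blast+
  have cols: "(\<Sum>i<?n. cmod (D $$ (i,j))) \<le> \<Delta>" if "j < ?n" for j
    using col_le_norm[OF Dc that] nD by linarith
  have rows: "(\<Sum>j<?n. cmod (D $$ (i,j))) \<le> \<Delta>" if i: "i < ?n" for i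
  proof -
    have hh: "\<forall>i<dim_row D. \<forall>j<dim_row D. D $$ (i, j) = cnj (D $$ (j, i))"
      using h unfolding hermitian_mat_def by blast
    have dr: "dim_row D = ?n" using Dc by simp
    have "cmod (D $$ (i,j)) = cmod (D $$ (j,i))" if j: "j < ?n" for j
    proof -
      have "D $$ (i,j) = cnj (D $$ (j,i))" using hh i j unfolding dr by blast
      then show ?thesis by (simp only: complex_mod_cnj)
    qed
    then have "(\<Sum>j<?n. cmod (D $$ (i,j))) = (\<Sum>j<?n. cmod (D $$ (j,i)))"
      by (intro sum.cong) auto
    then show ?thesis using cols[OF i] by simp
  qed
  have "\<bar>Re (mtrace (kron \<rho>A \<rho>B * D))\<bar> \<le> \<Delta>"
    by (rule trace_bound[OF kron_good[OF A B] Dc rows cols])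
  then show ?thesis by simp
qed

lemma ident_deception:
  assumes "\<Delta> \<ge> 0" "n \<ge> 1"
  shows "complex_of_real \<Delta> \<cdot>\<^sub>m 1\<^sub>m n \<in> deception_set n \<Delta>"
proof -
  let ?I = "complex_of_real \<Delta> \<cdot>\<^sub>m 1\<^sub>m n"
  have c: "?I \<in> carrier_mat n n" by simp
  have "hermitian_mat ?I" unfolding hermitian_mat_def
  proof (intro conjI allI impI)
    show "dim_row ?I = dim_col ?I" by simp
    fix i j assume "i < dim_row ?I" "j < dim_row ?I"
    then have "i < n" "j < n" by auto
    then show "?I $$ (i,j) = cnj (?I $$ (j,i))" by simp
  qed
  then show ?thesis unfolding deception_set_def using c ident_norm[OF assms] by simp
qed

lemma ident_trace:
  assumes A: "\<rho>A \<in> density_mats nA" and B: "\<rho>B \<in> density_mats nB"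
  shows "Re (mtrace (kron \<rho>A \<rho>B * (complex_of_real \<Delta> \<cdot>\<^sub>m 1\<^sub>m (nA*nB)))) = \<Delta>"
proof -
  let ?K = "kron \<rho>A \<rho>B"
  have g: "goodK ?K (nA*nB)" by (rule kron_good[OF A B])
  have K: "?K \<in> carrier_mat (nA*nB) (nA*nB)" using g unfolding goodK_def by auto
  have "?K * (complex_of_real \<Delta> \<cdot>\<^sub>m 1\<^sub>m (nA*nB)) = complex_of_real \<Delta> \<cdot>\<^sub>m (?K * 1\<^sub>m (nA*nB))"
    by (rule mult_smult_distrib[OF K one_carrier_mat])
  also have "\<dots> = complex_of_real \<Delta> \<cdot>\<^sub>m ?K" using K by simp
  finally have e: "?K * (complex_of_real \<Delta> \<cdot>\<^sub>m 1\<^sub>m (nA*nB)) = complex_of_real \<Delta> \<cdot>\<^sub>m ?K" .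
  have "Re (mtrace (complex_of_real \<Delta> \<cdot>\<^sub>m ?K)) = (\<Sum>i<nA*nB. \<Delta> * Re (?K $$ (i,i)))"
    unfolding mtrace_def using K by (simp add: Re_sum)
  also have "\<dots> = \<Delta>" using g unfolding goodK_def by (simp flip: sum_distrib_left)
  finally show ?thesis unfolding e .
qed

lemma value_shift:
  assumes nA: "nA \<ge> 1" and nB: "nB \<ge> 1" and \<Delta>: "\<Delta> \<ge> 0"
    and H: "H \<in> carrier_mat (nA * nB) (nA * nB)" and \<sigma>: "\<sigma> \<in> density_mats nB"
  shows "robust_value nA nB \<Delta> H \<sigma> = naive_value nA H \<sigma> - \<Delta>"
proof -
  define SN where "SN = {payoff \<rho>A \<sigma> H | \<rho>A. \<rho>A \<in> density_mats nA}"
  define SR where "SR = {payoff \<rho>A \<sigma> (H - D) | \<rho>A D. \<rho>A \<in> density_mats nA \<and> D \<in> deception_set (nA * nB) \<Delta>}"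
  define C where "C = (\<Sum>i<nA*nB. \<Sum>j<nA*nB. cmod (H $$ (i,j)))"
  define I where "I = complex_of_real \<Delta> \<cdot>\<^sub>m 1\<^sub>m (nA*nB)"
  have I: "I \<in> deception_set (nA*nB) \<Delta>" unfolding I_def
    by (rule ident_deception[OF \<Delta>]) (use nA nB in simp)
  have Ic: "I \<in> carrier_mat (nA*nB) (nA*nB)" unfolding I_def by simp
  obtain \<rho>0 where \<rho>0: "\<rho>0 \<in> density_mats nA" using density_exists[OF nA] by blast
  have SNne: "SN \<noteq> {}" unfolding SN_def using \<rho>0 by blast
  have SNbdd: "bdd_below SN"
  proof (rule bdd_belowI)
    fix s assume "s \<in> SN"
    then obtain \<rho>A where "s = payoff \<rho>A \<sigma> H" "\<rho>A \<in> density_mats nA" unfolding SN_def by blast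
    then show "- C \<le> s" using payoff_bound[OF _ \<sigma> H, of \<rho>A] unfolding C_def by simp
  qed
  have SRlow: "Inf SN - \<Delta> \<le> r" if "r \<in> SR" for r
  proof -
    from that obtain \<rho>A D where r: "r = payoff \<rho>A \<sigma> (H - D)" and A: "\<rho>A \<in> density_mats nA"
      and D: "D \<in> deception_set (nA * nB) \<Delta>" unfolding SR_def by blast
    have Dc: "D \<in> carrier_mat (nA*nB) (nA*nB)" using D unfolding deception_set_def by blast
    have "Inf SN \<le> payoff \<rho>A \<sigma> H" using A unfolding SN_def by (intro cInf_lower) (auto simp: SNbdd[unfolded SN_def])
    then show ?thesis unfolding r payoff_split[OF A \<sigma> H Dc] using deception_bound[OF A \<sigma> D] by linarith
  qed
  have SRmem: "s - \<Delta> \<in> SR" if "s \<in> SN" for s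
  proof -
    from that obtain \<rho>A where s: "s = payoff \<rho>A \<sigma> H" and A: "\<rho>A \<in> density_mats nA" unfolding SN_def by blast
    have e1: "payoff \<rho>A \<sigma> (H - I) = payoff \<rho>A \<sigma> H - Re (mtrace (kron \<rho>A \<sigma> * I))"
      by (rule payoff_split[OF A \<sigma> H Ic])
    have e2: "Re (mtrace (kron \<rho>A \<sigma> * I)) = \<Delta>" unfolding I_def by (rule ident_trace[OF A \<sigma>])
    have "s - \<Delta> = payoff \<rho>A \<sigma> (H - I)" using e1 e2 s by simp
    then show ?thesis unfolding SR_def using A I by blast
  qed
  have SRne: "SR \<noteq> {}" using SRmem SNne by blast
  have SRbdd: "bdd_below SR" by (rule bdd_belowI, erule SRlow)
  have le1: "Inf SN - \<Delta> \<le> Inf SR" by (rule cInf_greatest[OF SRne SRlow])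
  have le2: "Inf SR + \<Delta> \<le> Inf SN"
  proof (rule cInf_greatest[OF SNne])
    fix s assume "s \<in> SN"
    then have "Inf SR \<le> s - \<Delta>" using SRmem SRbdd by (intro cInf_lower) auto
    then show "Inf SR + \<Delta> \<le> s" by simp
  qed
  have "robust_value nA nB \<Delta> H \<sigma> = Inf SR" unfolding robust_value_def SR_def ..
  moreover have "naive_value nA H \<sigma> = Inf SN" unfolding naive_value_def SN_def ..
  ultimately show ?thesis using le1 le2 by linarith
qed

theorem theorem1:
  fixes nA nB :: nat and \<Delta> :: real and H :: "complex mat"
  assumes "nA \<ge> 1" and "nB \<ge> 1" and "\<Delta> \<ge> 0"
    and "H \<in> carrier_mat (nA * nB) (nA * nB)" and "hermitian_mat H"
  shows "Phi nA nB H = Phi_r nA nB \<Delta> H"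
proof -
  have v: "robust_value nA nB \<Delta> H \<sigma> = naive_value nA H \<sigma> - \<Delta>" if "\<sigma> \<in> density_mats nB" for \<sigma>
    by (rule value_shift[OF assms(1-4) that])
  show ?thesis unfolding Phi_def Phi_r_def using v by auto
qed

end
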